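(* Let $\nabla$ be a non-flat, torsion-free, real-analytic, geodesically complete affine connection on $\mathbf{R}^2$ which is invariant under the standard linear action of $\mathrm{SL}(2,\mathbf{R})$. Then, for some $k\in\mathbf{R}^*$, $$\nabla_{\partial_x}\partial_x=ky^2E,\quad \nabla_{\partial_x}\partial_y=-kxyE,\quad \nabla_{\partial_y}\partial_y=kx^2E,\qquad E=x\partial_x+y\partial_y.$$ Its parametrized geodesics are either lines through the origin parametrized at constant speed, or conics centered at the origin of special affine curvature $\sqrt[3]{k}$, parametrized at constant speed with respect to special affine arc length.
   Context: Special affine arc length and special affine curvature refer to the invariants of plane curves under the group of area-preserving affine maps $\mathrm{SL}(2,\mathbf{R})\ltimes\mathbf{R}^2$ (for a curve parametrized so that $\det(c',c'')=1$, the parameter is the special affine arc length and the special affine curvature is $\kappa=\det(c'',c''')$). *)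

theory Defs
  imports "HOL-Analysis.Analysis"
begin

text \<open>Points and tangent vectors of R^2 are elements of real^2 (component 1 = x, 2 = y).
An affine connection on R^2 is given by its Christoffel symbols:
G p i j k = Gamma^k_{ij}(p), i.e. nabla_{d_i} d_j = sum_k G p i j k d_k.\<close>

type_synonym christoffel = "real^2 \<Rightarrow> 2 \<Rightarrow> 2 \<Rightarrow> 2 \<Rightarrow> real"

definition chris :: "christoffel \<Rightarrow> real^2 \<Rightarrow> real^2 \<Rightarrow> real^2 \<Rightarrow> real^2" where
  "chris G p u v = (\<chi> k. \<Sum>i\<in>UNIV. \<Sum>j\<in>UNIV. G p i j k * u$i * v$j)"

definition det2 :: "real^2 \<Rightarrow> real^2 \<Rightarrow> real" where
  "det2 u v = u$1 * v$2 - u$2 * v$1"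

definition pd :: "2 \<Rightarrow> (real^2 \<Rightarrow> real) \<Rightarrow> real^2 \<Rightarrow> real" where
  "pd i f p = deriv (\<lambda>t. f (p + t *\<^sub>R axis i 1)) 0"

definition real_analytic2 :: "(real^2 \<Rightarrow> real) \<Rightarrow> bool" where
  "real_analytic2 f \<longleftrightarrow> (\<forall>p. \<exists>r>0. \<exists>a :: nat \<Rightarrow> nat \<Rightarrow> real.
     \<forall>q\<in>ball p r. ((\<lambda>(m,n). a m n * (q$1 - p$1)^m * (q$2 - p$2)^n) has_sum f q) UNIV)"

definition analytic_connection :: "christoffel \<Rightarrow> bool" where
  "analytic_connection G \<longleftrightarrow> (\<forall>i j k. real_analytic2 (\<lambda>p. G p i j k))"

definition torsion_free :: "christoffel \<Rightarrow> bool" where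
  "torsion_free G \<longleftrightarrow> (\<forall>p i j k. G p i j k = G p j i k)"

text \<open>Curvature tensor R(d_i,d_j)d_k = sum_l curv G p i j k l d_l.\<close>
definition curv :: "christoffel \<Rightarrow> real^2 \<Rightarrow> 2 \<Rightarrow> 2 \<Rightarrow> 2 \<Rightarrow> 2 \<Rightarrow> real" where
  "curv G p i j k l =
     pd i (\<lambda>q. G q j k l) p - pd j (\<lambda>q. G q i k l) p
     + (\<Sum>m\<in>UNIV. G p i m l * G p j k m - G p j m l * G p i k m)"

definition flat :: "christoffel \<Rightarrow> bool" where
  "flat G \<longleftrightarrow> (\<forall>p i j k l. curv G p i j k l = 0)"

definition vd :: "(real \<Rightarrow> real^2) \<Rightarrow> real \<Rightarrow> real^2" where
  "vd c t = vector_derivative c (at t)"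

definition geodesic :: "christoffel \<Rightarrow> (real \<Rightarrow> real^2) \<Rightarrow> bool" where
  "geodesic G c \<longleftrightarrow> (\<forall>t. c differentiable at t \<and> vd c differentiable at t) \<and>
     (\<forall>t. vd (vd c) t + chris G (c t) (vd c t) (vd c t) = 0)"

definition geodesically_complete :: "christoffel \<Rightarrow> bool" where
  "geodesically_complete G \<longleftrightarrow> (\<forall>p v. \<exists>c. geodesic G c \<and> c 0 = p \<and> vd c 0 = v)"

definition SL2_invariant :: "christoffel \<Rightarrow> bool" where
  "SL2_invariant G \<longleftrightarrow> (\<forall>A :: real^2^2. det A = 1 \<longrightarrow>
     (\<forall>p u v. chris G (A *v p) (A *v u) (A *v v) = A *v chris G p u v))"

definition sa_arclength_param :: "(real \<Rightarrow> real^2) \<Rightarrow> bool" where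
  "sa_arclength_param g \<longleftrightarrow>
     (\<forall>s. g differentiable at s \<and> vd g differentiable at s \<and> vd (vd g) differentiable at s) \<and>
     (\<forall>s. det2 (vd g s) (vd (vd g) s) = 1)"

definition sa_curvature :: "(real \<Rightarrow> real^2) \<Rightarrow> real \<Rightarrow> real" where
  "sa_curvature g s = det2 (vd (vd g) s) (vd (vd (vd g)) s)"

definition centered_conic :: "(real^2) set \<Rightarrow> bool" where
  "centered_conic C \<longleftrightarrow> (\<exists>a b c d. a * c - b^2 \<noteq> 0 \<and> d \<noteq> 0 \<and>
     C = {p. a * (p$1)^2 + 2 * b * p$1 * p$2 + c * (p$2)^2 = d})"

end

theory Submission imports Defs begin

definition TT :: "real \<Rightarrow> real \<Rightarrow> real^2 \<Rightarrow> real^2 \<Rightarrow> real^2 \<Rightarrow> real^2" where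
  "TT a k p u v = a *\<^sub>R (det2 p u *\<^sub>R v + det2 p v *\<^sub>R u) + (k * det2 p u * det2 p v) *\<^sub>R p"

lemma TT_nth: "TT a k p u v $ i = a * (det2 p u * v$i + det2 p v * u$i) + k * det2 p u * det2 p v * p$i"
  by (simp add: TT_def)

lemma chris_nth: "chris G p u v $ l = G p 1 1 l * u$1 * v$1 + G p 1 2 l * u$1 * v$2
   + G p 2 1 l * u$2 * v$1 + G p 2 2 l*u$2 * v$2"
  by (simp add: chris_def sum_2)

lemma mv_nth: "((A::real^2^2) *v x) $ 1 = A$1$1 * x$1 + A$1$2 * x$2"
   "((A::real^2^2) *v x) $ 2 = A$2$1 * x$1 + A$2$2 * x$2"
  by (simp_all add: matrix_vector_mult_def sum_2)

lemma det2_mult: "det2 ((A::real^2^2) *v p) (A *v q) = det A * det2 p q"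
  by (simp add: det2_def mv_nth det_2) algebra

lemma TT_equiv: assumes "det (A::real^2^2) = 1"
  shows "TT a k (A *v p) (A *v u) (A *v v) = A *v TT a k p u v"
  by (simp add: TT_def det2_mult assms algebra_simps)

lemma chris_neg: "chris G p (-u) (-v) = chris G p u v"
  by (simp add: vec_eq_iff forall_2 chris_nth)

lemma sl2_structure:
  assumes inv: "SL2_invariant G" and tf: "torsion_free G"
  shows "\<exists>a k. \<forall>p u v. chris G p u v = TT a k p u v"
proof -
  define e1 :: "real^2" where "e1 = axis 1 1"
  define e2 :: "real^2" where "e2 = axis 2 1"
  have e1c: "e1$1 = 1" "e1$2 = 0" and e2c: "e2$1 = 0" "e2$2 = 1"
    by (simp_all add: e1_def e2_def axis_def)
  define N :: "real^2^2" where "N = vector [vector [1,1], vector [0,1]]"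
  have dN: "det N = 1" by (simp add: N_def det_2)
  have Nc: "N$1$1 = 1" "N$1$2 = 1" "N$2$1 = 0" "N$2$2 = 1" by (simp_all add: N_def)
  have iN: "\<And>p u v. chris G (N *v p) (N *v u) (N *v v) = N *v chris G p u v"
    using inv dN unfolding SL2_invariant_def by blast
  have sym: "\<And>p l. G p 2 1 l = G p 1 2 l" using tf unfolding torsion_free_def by metis
  have Ne1: "N *v e1 = e1" by (simp add: vec_eq_iff forall_2 mv_nth Nc e1c)
  have h1: "chris G e1 e1 e1 = N *v chris G e1 e1 e1" using iN[of e1 e1 e1] Ne1 by simp
  have h2: "chris G e1 e1 (N *v e2) = N *v chris G e1 e1 e2" using iN[of e1 e1 e2] Ne1 by simp
  have h3: "chris G e1 (N *v e2) (N *v e2) = N *v chris G e1 e2 e2" using iN[of e1 e2 e2] Ne1 by simp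
  note eqs = h1[unfolded vec_eq_iff forall_2] h2[unfolded vec_eq_iff forall_2] h3[unfolded vec_eq_iff forall_2]
  have E: "G e1 1 1 1 = 0" "G e1 1 1 2 = 0" "G e1 1 2 2 = 0" "G e1 2 2 2 = 2 * G e1 1 2 1"
    using eqs by (simp_all add: chris_nth mv_nth Nc e1c e2c sym)
  define a where "a = G e1 1 2 1"
  define k where "k = G e1 2 2 1"
  have Ae1: "\<And>u v. chris G e1 u v = TT a k e1 u v"
    by (simp add: vec_eq_iff forall_2 chris_nth TT_nth det2_def e1c E sym a_def k_def algebra_simps)
  have "chris G p u v = TT a k p u v" for p u v
  proof (cases "p = 0")
    case True
    define M :: "real^2^2" where "M = vector [vector [-1,0], vector [0,-1]]"
    have dM: "det M = 1" by (simp add: M_def det_2)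
    have Mv: "M *v x = - x" for x by (simp add: vec_eq_iff forall_2 mv_nth M_def)
    have "chris G (M *v 0) (M *v u) (M *v v) = M *v chris G 0 u v"
      using inv dM unfolding SL2_invariant_def by blast
    hence "chris G 0 u v = - chris G 0 u v" by (simp add: Mv chris_neg)
    hence "chris G 0 u v = 0" by (simp add: vec_eq_iff forall_2)
    thus ?thesis using True by (simp add: TT_def det2_def)
  next
    case False
    define n where "n = (p$1)^2 + (p$2)^2"
    have n0: "n \<noteq> 0" using False
      by (simp add: n_def vec_eq_iff forall_2)
    define A :: "real^2^2" where "A = vector [vector [p$1, - p$2 / n], vector [p$2, p$1 / n]]"
    define B :: "real^2^2" where "B = vector [vector [p$1 / n, p$2 / n], vector [- p$2, p$1]]"
    have dA: "det A = 1" using n0 unfolding A_def by (simp add: det_2 field_simps) (simp add: n_def power2_eq_square)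
    have nn: "p$1*p$1 + p$2*p$2 = n" by (simp add: n_def power2_eq_square)
    have "A ** B = mat 1"
      unfolding A_def B_def using n0 
      apply (simp add: vec_eq_iff forall_2 matrix_matrix_mult_def sum_2 mat_def)
      apply (simp add: field_simps nn)
      done
    hence AB: "A *v (B *v w) = w" for w by (simp add: matrix_vector_mul_assoc)
    have Ae: "A *v e1 = p" by (simp add: vec_eq_iff forall_2 mv_nth A_def e1c)
    have "chris G p u v = chris G (A *v e1) (A *v (B *v u)) (A *v (B *v v))" by (simp add: AB Ae)
    also have "\<dots> = A *v chris G e1 (B *v u) (B *v v)" using inv dA unfolding SL2_invariant_def by blast
    also have "\<dots> = A *v TT a k e1 (B *v u) (B *v v)" by (simp add: Ae1)
    also have "\<dots> = TT a k p u v" by (simp add: TT_equiv[OF dA, symmetric] AB Ae)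
    finally show ?thesis .
  qed
  thus ?thesis by blast
qed
lemma comp_deriv: "(f has_vector_derivative f') (at t) \<Longrightarrow> ((\<lambda>t. f t $ i) has_real_derivative (f' $ i)) (at t)"
  for f :: "real \<Rightarrow> real^2"
  using bounded_linear.has_vector_derivative[OF bounded_linear_vec_nth]
  by (metis has_real_derivative_iff_has_vector_derivative)

lemma vd_facts:
  assumes "geodesic G c"
  shows "(c has_vector_derivative vd c t) (at t)"
    "(vd c has_vector_derivative vd (vd c) t) (at t)"
    "vd (vd c) t = - chris G (c t) (vd c t) (vd c t)"
proof -
  have d: "c differentiable at t" "vd c differentiable at t"
    and e: "vd (vd c) t + chris G (c t) (vd c t) (vd c t) = 0"
    using assms unfolding geodesic_def by auto
  show "(c has_vector_derivative vd c t) (at t)"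
    unfolding vd_def using d(1) vector_derivative_works by blast
  show "(vd c has_vector_derivative vd (vd c) t) (at t)"
    unfolding vd_def[of "vd c"] using d(2) vector_derivative_works by blast
  show "vd (vd c) t = - chris G (c t) (vd c t) (vd c t)"
    using e by (simp add: eq_neg_iff_add_eq_0)
qed

lemma h_deriv:
  assumes S: "\<forall>p u v. chris G p u v = TT a k p u v" and g: "geodesic G c"
  shows "((\<lambda>t. det2 (c t) (vd c t)) has_real_derivative (-2*a*(det2 (c t) (vd c t))^2)) (at t)"
proof -
  note F = vd_facts[OF g, of t]
  have c1: "((\<lambda>t. c t $ i) has_real_derivative (vd c t $ i)) (at t)" for i using comp_deriv[OF F(1)] .
  have c2: "((\<lambda>t. vd c t $ i) has_real_derivative (vd (vd c) t $ i)) (at t)" for i using comp_deriv[OF F(2)] .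
  have "((\<lambda>t. c t$1 * vd c t$2 - c t$2 * vd c t$1) has_real_derivative
     (c t$1 * vd (vd c) t$2 + vd c t$1 * vd c t$2 - (c t$2 * vd (vd c) t$1 + vd c t$2 * vd c t$1))) (at t)"
    by (rule DERIV_diff[OF DERIV_mult'[OF c1 c2] DERIV_mult'[OF c1 c2]])
  moreover have "c t$1 * vd (vd c) t$2 + vd c t$1 * vd c t$2 - (c t$2 * vd (vd c) t$1 + vd c t$2 * vd c t$1)
     = -2*a*(det2 (c t) (vd c t))^2"
    unfolding F(3) by (simp add: S TT_nth det2_def power2_eq_square algebra_simps)
  ultimately show ?thesis by (simp add: det2_def)
qed

lemma resc:
  fixes f f' :: "real \<Rightarrow> real^2"
  assumes "\<And>x. (f has_vector_derivative f' x) (at x)" and "\<mu> \<noteq> 0"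
  shows "vd (\<lambda>s. f (s/\<mu>)) = (\<lambda>s. (1/\<mu>) *\<^sub>R f' (s/\<mu>))"
    "(\<lambda>s. f (s/\<mu>)) differentiable at s"
proof -
  have D: "((\<lambda>s. f (s/\<mu>)) has_vector_derivative ((1/\<mu>) *\<^sub>R f' (s/\<mu>))) (at s)" for s
  proof -
    have "((\<lambda>s. s/\<mu>) has_vector_derivative (1/\<mu>)) (at s)"
      using assms(2) by (auto intro!: derivative_eq_intros simp: has_real_derivative_iff_has_vector_derivative[symmetric])
    from vector_diff_chain_at[OF this assms(1)] show ?thesis by (simp add: o_def)
  qed
  show "vd (\<lambda>s. f (s/\<mu>)) = (\<lambda>s. (1/\<mu>) *\<^sub>R f' (s/\<mu>))"
    by (rule ext) (simp add: vd_def vector_derivative_at[OF D])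
  show "(\<lambda>s. f (s/\<mu>)) differentiable at s" using D differentiable_def has_vector_derivative_def by blast
qed

lemma a_zero:
  assumes S: "\<forall>p u v. chris G p u v = TT a k p u v" and comp: "geodesically_complete G"
  shows "a = 0"
proof (rule ccontr)
  assume a0: "a \<noteq> 0"
  define e1 :: "real^2" where "e1 = axis 1 1"
  define v :: "real^2" where "v = (-a) *\<^sub>R axis 2 1"
  obtain c where g: "geodesic G c" and c0: "c 0 = e1" "vd c 0 = v"
    using comp unfolding geodesically_complete_def by blast
  define h where "h = (\<lambda>t. det2 (c t) (vd c t))"
  have hd: "(h has_real_derivative (-2*a*(h t)^2)) (at t)" for t
    unfolding h_def using h_deriv[OF S g] .
  have h0: "h 0 = -a" by (simp add: h_def c0 e1_def v_def det2_def axis_def)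
  define T where "T = 1/(2*a^2)"
  have T0: "T > 0" using a0 by (simp add: T_def)
  have mono: "a * h t \<le> - (a^2)" if "0 \<le> t" for t
  proof -
    have "(\<lambda>s. a * h s) t \<le> (\<lambda>s. a * h s) 0"
      by (rule deriv_nonpos_imp_antimono[where g="\<lambda>s. a * h s" and a=0 and b=t and g'="\<lambda>s. a*(-2*a*(h s)^2)"])
        (use DERIV_cmult[OF hd, of a] that in \<open>auto simp: mult.assoc[symmetric]\<close>)
    thus ?thesis using h0 by (simp add: power2_eq_square)
  qed
  have hnz: "h t \<noteq> 0" if "0 \<le> t" for t
  proof
    assume "h t = 0"
    with mono[OF that] have "a^2 \<le> 0" by simp
    with a0 show False by simp
  qed
  define w where "w = (\<lambda>t. inverse (h t) - 2*a*t)"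
  have wd: "(w has_real_derivative 0) (at t)" if "0 \<le> t" for t
  proof -
    have "(w has_real_derivative (- ((-2*a*(h t)^2) * inverse (h t ^ Suc (Suc 0))) - 2*a)) (at t)"
      unfolding w_def
      by (intro DERIV_diff DERIV_inverse_fun hd hnz that) (auto intro!: derivative_eq_intros)
    moreover have "- ((-2*a*(h t)^2) * inverse (h t ^ Suc (Suc 0))) - 2*a = 0"
      using hnz[OF that] by (simp add: field_simps power2_eq_square)
    ultimately show ?thesis by metis
  qed
  have "w T = w 0"
  proof (rule DERIV_isconst_end[OF T0])
    show "continuous_on {0..T} w"
      by (rule continuous_at_imp_continuous_on) (metis DERIV_isCont wd atLeastAtMost_iff)
    show "\<And>x. 0 < x \<Longrightarrow> x < T \<Longrightarrow> (w has_real_derivative 0) (at x)" using wd by auto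
  qed
  hence "inverse (h T) - 2*a*T = inverse (-a)" by (simp add: w_def h0)
  moreover have "2*a*T = 1/a" using a0 by (simp add: T_def power2_eq_square)
  ultimately have "inverse (h T) = 0" using a0 by (simp add: field_simps)
  thus False using hnz[of T] T0 by simp
qed

lemma det2_scale[simp]: "det2 (\<alpha> *\<^sub>R u) (\<beta> *\<^sub>R v) = \<alpha> * \<beta> * det2 u v"
  by (simp add: det2_def algebra_simps)

lemma det2_swap: "det2 v u = - det2 u v"
  by (simp add: det2_def algebra_simps)

lemma cmul_vd: "(f has_vector_derivative f') F \<Longrightarrow> ((\<lambda>x. \<alpha> *\<^sub>R f x) has_vector_derivative (\<alpha> *\<^sub>R f')) F"
  for f :: "real \<Rightarrow> real^2"
  using bounded_linear.has_vector_derivative[OF bounded_linear_scaleR_right] by blast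

lemma geod_class:
  assumes S: "\<forall>p u v. chris G p u v = TT 0 k p u v" and k0: "k \<noteq> 0" and g: "geodesic G c"
  shows "(\<exists>p v. (\<forall>t. c t = p + t *\<^sub>R v) \<and> det2 p v = 0) \<or>
        ((\<exists>C. centered_conic C \<and> range c \<subseteq> C) \<and>
         (\<exists>g \<mu>. \<mu> \<noteq> 0 \<and> sa_arclength_param g \<and> (\<forall>s. sa_curvature g s = root 3 k) \<and>
                (\<forall>t. c t = g (\<mu> * t))))"
proof -
  note F = vd_facts[OF g]
  define h0 where "h0 = det2 (c 0) (vd c 0)"
  have hc: "det2 (c t) (vd c t) = h0" for t
  proof -
    have "\<forall>x. ((\<lambda>t. det2 (c t) (vd c t)) has_real_derivative 0) (at x)"
      using h_deriv[OF S g] by simp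
    from DERIV_isconst_all[OF this, of t 0] show ?thesis unfolding h0_def by simp
  qed
  define w where "w = k * h0^2"
  have acc: "vd (vd c) t = (- w) *\<^sub>R c t" for t
    using F(3)[of t] hc[of t] by (simp add: S TT_def w_def power2_eq_square)
  have cd: "((\<lambda>t. c t $ i) has_real_derivative vd c t $ i) (at t)" for i t
    using comp_deriv[OF F(1)] .
  have vdd: "((\<lambda>t. vd c t $ i) has_real_derivative - w * c t $ i) (at t)" for i t
    using comp_deriv[OF F(2)[of t], of i] acc[of t] by simp
  show ?thesis
  proof (cases "h0 = 0")
    case True
    hence w0: "w = 0" by (simp add: w_def)
    have vc: "vd c t $ i = vd c 0 $ i" for t i
    proof -
      have "\<forall>x. ((\<lambda>t. vd c t $ i) has_real_derivative 0) (at x)" using vdd[of i] w0 by simp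
      from DERIV_isconst_all[OF this, of t 0] show ?thesis by simp
    qed
    have cc: "c t $ i = c 0 $ i + t * vd c 0 $ i" for t i
    proof -
      have "\<forall>x. ((\<lambda>t. c t $ i - t * vd c 0 $ i) has_real_derivative 0) (at x)"
      proof
        fix x
        have "((\<lambda>t. c t $ i - t * vd c 0 $ i) has_real_derivative (vd c x $ i - 1 * vd c 0 $ i)) (at x)"
          by (intro DERIV_diff cd DERIV_cmult_right DERIV_ident)
        thus "((\<lambda>t. c t $ i - t * vd c 0 $ i) has_real_derivative 0) (at x)" using vc[of x i] by simp
      qed
      from DERIV_isconst_all[OF this, of t 0] show ?thesis by simp
    qed
    have "\<forall>t. c t = c 0 + t *\<^sub>R vd c 0"
    proof
      fix t
      show "c t = c 0 + t *\<^sub>R vd c 0" using cc[of t 1] cc[of t 2] by (simp add: vec_eq_iff forall_2)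
    qed
    moreover have "det2 (c 0) (vd c 0) = 0" using True h0_def by simp
    ultimately show ?thesis by blast
  next
    case False
    define P where "P = (\<lambda>i j t. vd c t $ i * vd c t $ j + w * (c t $ i * c t $ j))"
    have Pc: "P i j t = P i j 0" for i j t
    proof -
      have "\<forall>x. (P i j has_real_derivative 0) (at x)"
      proof
        fix x
        have "(P i j has_real_derivative
           (vd c x $ i * (- w * c x $ j) + (- w * c x $ i) * vd c x $ j
             + w * (c x $ i * vd c x $ j + vd c x $ i * c x $ j))) (at x)"
          unfolding P_def by (rule DERIV_add[OF DERIV_mult'[OF vdd vdd] DERIV_cmult[OF DERIV_mult'[OF cd cd]]])
        thus "(P i j has_real_derivative 0) (at x)" by (simp add: algebra_simps)
      qed
      from DERIV_isconst_all[OF this, of t 0] show ?thesis by simp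
    qed
    define C where "C = {p::real^2. P 2 2 0 * (p$1)^2 + 2 * (- P 1 2 0) * p$1 * p$2 + P 1 1 0 * (p$2)^2 = h0^2}"
    have "centered_conic C"
      unfolding centered_conic_def
    proof (intro exI conjI)
      have "P 2 2 0 * P 1 1 0 - (- P 1 2 0)^2 = w * h0^2"
        by (simp add: P_def h0_def det2_def power2_eq_square algebra_simps)
      thus "P 2 2 0 * P 1 1 0 - (- P 1 2 0)^2 \<noteq> 0" using k0 False by (simp add: w_def)
      show "h0^2 \<noteq> 0" using False by simp
    qed (simp add: C_def)
    moreover have "range c \<subseteq> C"
    proof
      fix y assume "y \<in> range c"
      then obtain t where y: "y = c t" by blast
      have "P 2 2 t * (c t$1)^2 + 2 * (- P 1 2 t) * c t$1 * c t$2 + P 1 1 t * (c t$2)^2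
           = (det2 (c t) (vd c t))^2"
        by (simp add: P_def det2_def power2_eq_square algebra_simps)
      thus "y \<in> C" using hc[of t] Pc[of 1 1 t] Pc[of 1 2 t] Pc[of 2 2 t] y by (simp add: C_def)
    qed
    moreover
    define r where "r = root 3 k"
    have r3: "r^3 = k" unfolding r_def by (simp add: odd_real_root_pow)
    have r0: "r \<noteq> 0" using k0 r3 by auto
    define \<mu> where "\<mu> = r * h0"
    have m0: "\<mu> \<noteq> 0" using r0 False by (simp add: \<mu>_def)
    define gg where "gg = (\<lambda>s. c (s/\<mu>))"
    define f1 where "f1 = (\<lambda>x. (1/\<mu>) *\<^sub>R vd c x)"
    define f2 where "f2 = (\<lambda>x. (1/\<mu>) *\<^sub>R ((1/\<mu>) *\<^sub>R ((- w) *\<^sub>R c x)))"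
    define f3 where "f3 = (\<lambda>x. (1/\<mu>) *\<^sub>R ((1/\<mu>) *\<^sub>R ((1/\<mu>) *\<^sub>R ((- w) *\<^sub>R vd c x))))"
    have D1: "(c has_vector_derivative vd c x) (at x)" for x using F(1) .
    have D2: "(f1 has_vector_derivative ((1/\<mu>) *\<^sub>R ((- w) *\<^sub>R c x))) (at x)" for x
      unfolding f1_def acc[of x, symmetric] by (rule cmul_vd[OF F(2)])
    have D3: "((\<lambda>x. (1/\<mu>) *\<^sub>R ((1/\<mu>) *\<^sub>R ((- w) *\<^sub>R c x))) has_vector_derivative
         ((1/\<mu>) *\<^sub>R ((1/\<mu>) *\<^sub>R ((- w) *\<^sub>R vd c x)))) (at x)" for x
      by (intro cmul_vd D1)
    have vg: "vd gg = (\<lambda>s. f1 (s/\<mu>))" unfolding gg_def resc(1)[OF D1 m0] f1_def by simp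
    have vgg: "vd (vd gg) = (\<lambda>s. f2 (s/\<mu>))" unfolding vg resc(1)[OF D2 m0] f2_def by simp
    have vggg: "vd (vd (vd gg)) = (\<lambda>s. f3 (s/\<mu>))" unfolding vgg f2_def resc(1)[OF D3 m0] f3_def by simp
    have vg': "vd gg s = (1/\<mu>) *\<^sub>R vd c (s/\<mu>)" for s by (simp add: vg f1_def)
    have vgg': "vd (vd gg) s = (- w / \<mu>^2) *\<^sub>R c (s/\<mu>)" for s
      by (simp add: vgg f2_def scaleR_scaleR power2_eq_square)
    have vggg': "vd (vd (vd gg)) s = (- w / \<mu>^3) *\<^sub>R vd c (s/\<mu>)" for s
      by (simp add: vggg f3_def scaleR_scaleR power3_eq_cube)
    have hcs: "det2 (vd c x) (c x) = - h0" for x using hc[of x] det2_swap by metis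
    have num1: "1 / \<mu> * (- w / \<mu>^2) * (- h0) = 1"
    proof -
      have "1 / \<mu> * (- w / \<mu>^2) * (- h0) = (k * h0^3) / (r^3 * h0^3)"
        by (simp add: w_def \<mu>_def power2_eq_square power3_eq_cube)
      also have "\<dots> = 1" using r0 False k0 by (simp add: r3)
      finally show ?thesis .
    qed
    have wr: "w = r^3 * h0^2" by (simp add: w_def r3)
    have q1: "- w / \<mu>^2 = - r" using r0 False
      unfolding wr \<mu>_def by (simp add: power2_eq_square power3_eq_cube)
    have q2: "- w / \<mu>^3 = - 1 / h0" using r0 False
      unfolding wr \<mu>_def by (simp add: power2_eq_square power3_eq_cube)
    have num2: "(- w / \<mu>^2) * (- w / \<mu>^3) * h0 = r"
      unfolding q1 q2 using False by simp
    have sa: "sa_arclength_param gg"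
      unfolding sa_arclength_param_def
    proof (intro conjI allI)
      fix s
      show "gg differentiable at s" unfolding gg_def by (rule resc(2)[OF D1 m0])
      show "vd gg differentiable at s" unfolding vg by (rule resc(2)[OF D2 m0])
      show "vd (vd gg) differentiable at s" unfolding vgg f2_def by (rule resc(2)[OF D3 m0])
      show "det2 (vd gg s) (vd (vd gg) s) = 1"
        unfolding vg' vgg' det2_scale hcs by (rule num1)
    qed
    have curv: "sa_curvature gg s = root 3 k" for s
      unfolding sa_curvature_def vggg' vgg' det2_scale hc num2 r_def ..
    have "\<forall>t. c t = gg (\<mu> * t)" using m0 by (simp add: gg_def)
    ultimately show ?thesis using m0 sa curv by blast
  qed
qed

theorem proposition8p1:
  fixes G :: christoffel
  assumes "\<not> flat G"
    and "torsion_free G"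
    and "analytic_connection G"
    and "geodesically_complete G"
    and "SL2_invariant G"
  shows "\<exists>k::real. k \<noteq> 0 \<and>
     (\<forall>p l. G p 1 1 l = k * (p$2)^2 * p$l
          \<and> G p 1 2 l = - k * p$1 * p$2 * p$l
          \<and> G p 2 2 l = k * (p$1)^2 * p$l) \<and>
     (\<forall>c. geodesic G c \<longrightarrow>
        (\<exists>p v. (\<forall>t. c t = p + t *\<^sub>R v) \<and> det2 p v = 0) \<or>
        ((\<exists>C. centered_conic C \<and> range c \<subseteq> C) \<and>
         (\<exists>g \<mu>. \<mu> \<noteq> 0 \<and> sa_arclength_param g \<and> (\<forall>s. sa_curvature g s = root 3 k) \<and>
                (\<forall>t. c t = g (\<mu> * t)))))"
proof -
  obtain a k where S: "\<forall>p u v. chris G p u v = TT a k p u v"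
    using sl2_structure[OF assms(5) assms(2)] by blast
  have a0: "a = 0" using a_zero[OF S assms(4)] .
  have S0: "\<forall>p u v. chris G p u v = TT 0 k p u v" using S a0 by simp
  have Gf: "G p i j l = chris G p (axis i 1) (axis j 1) $ l" for p i j l
  proof -
    have "i = 1 \<or> i = 2" "j = 1 \<or> j = 2" using exhaust_2 by blast+
    thus ?thesis by (elim disjE) (simp_all add: chris_nth axis_def)
  qed
  have Gform: "G p i j l = k * det2 p (axis i 1) * det2 p (axis j 1) * p$l" for p i j l
  proof -
    have "G p i j l = TT 0 k p (axis i 1) (axis j 1) $ l" using Gf[of p i j l] S0 by metis
    thus ?thesis by (simp add: TT_nth)
  qed
  have d1: "det2 p (axis 1 1) = - p$2" and d2: "det2 p (axis 2 1) = p$1" for p :: "real^2"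
    by (simp_all add: det2_def axis_def)
  have k0: "k \<noteq> 0"
  proof
    assume "k = 0"
    hence Gz: "G p i j l = 0" for p i j l using Gform by simp
    have "flat G" unfolding flat_def curv_def pd_def by (simp add: Gz)
    thus False using assms(1) by simp
  qed
  have "\<forall>p l. G p 1 1 l = k * (p$2)^2 * p$l
          \<and> G p 1 2 l = - k * p$1 * p$2 * p$l
          \<and> G p 2 2 l = k * (p$1)^2 * p$l"
    unfolding Gform d1 d2 by (simp add: power2_eq_square)
  moreover have "\<forall>c. geodesic G c \<longrightarrow>
        (\<exists>p v. (\<forall>t. c t = p + t *\<^sub>R v) \<and> det2 p v = 0) \<or>
        ((\<exists>C. centered_conic C \<and> range c \<subseteq> C) \<and>
         (\<exists>g \<mu>. \<mu> \<noteq> 0 \<and> sa_arclength_param g \<and> (\<forall>s. sa_curvature g s = root 3 k) \<and>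
                (\<forall>t. c t = g (\<mu> * t))))"
    using geod_class[OF S0 k0] by blast
  ultimately show ?thesis using k0 by blast
qed

end
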